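(* Let $\bar n\ge2$, weights $w_{ij}\ge 0$, the matrix $L$, the directed graph $\mathcal G$, the underlying undirected graph $\mathcal G_u$ and the matrices $E,F$ be as in the context, and suppose $\mathcal G_u$ is a tree. Then $\operatorname{rank}F=\bar n-1$ if and only if $\mathcal G$ contains a directed rooted spanning tree as a subgraph.
   Context: Given weights $w_{ij}\ge 0$ ($i\ne j\in\{1,\dots,\bar n\}$), $L\in\mathbb{R}^{\bar n\times\bar n}$ has $L_{ij}=-w_{ij}$ for $i\neq j$, $L_{ii}=\sum_{j\neq i}w_{ij}$. The directed graph $\mathcal G$ has vertex set $\{1,\dots,\bar n\}$ and an arc $(i,j)$ (from $i$ to $j$) if and only if $w_{ji}>0$. The underlying undirected graph $\mathcal G_u$ has an edge between $i$ and $j$ iff $w_{ij}+w_{ji}>0$; $\bar n_e$ is its number of edges. $E\in\mathbb{R}^{\bar n\times\bar n_e}$ is an oriented incidence matrix of $\mathcal G_u$ (each edge is given an orientation and an index $l$; the $l$-th column of $E$ is $e_i-e_j$ for the edge between $i$ and $j$ oriented from $i$ to $j$), and $F\in\mathbb{R}^{\bar n\times\bar n_e}$ has $l$-th column $w_{ij}e_i-w_{ji}e_j$ when the $l$-th column of $E$ is $e_i-e_j$ (so that $L=FE^\top$). A directed rooted spanning tree of $\mathcal G$ is a subgraph which is a directed tree containing all vertices, in which every vertex except a single root vertex has exactly one incoming arc. *)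

theory Defs
  imports "Jordan_Normal_Form.DL_Rank"
begin

text \<open>Vertices are 0..<n (the paper's 1..n shifted by one).
  Weights: w i j :: real, meaningful for i \<noteq> j.\<close>

definition dg_arcs :: "nat \<Rightarrow> (nat \<Rightarrow> nat \<Rightarrow> real) \<Rightarrow> (nat \<times> nat) set" where
  "dg_arcs n w = {(i,j). i < n \<and> j < n \<and> i \<noteq> j \<and> w j i > 0}"

definition ug_adj :: "nat \<Rightarrow> (nat \<Rightarrow> nat \<Rightarrow> real) \<Rightarrow> nat \<Rightarrow> nat \<Rightarrow> bool" where
  "ug_adj n w i j \<longleftrightarrow> i < n \<and> j < n \<and> i \<noteq> j \<and> w i j + w j i > 0"

definition ug_connected :: "nat set \<Rightarrow> (nat \<Rightarrow> nat \<Rightarrow> bool) \<Rightarrow> bool" where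
  "ug_connected V adj \<longleftrightarrow>
     (\<forall>u\<in>V. \<forall>v\<in>V. (u, v) \<in> {(a, b). a \<in> V \<and> b \<in> V \<and> adj a b}\<^sup>*)"

definition ug_acyclic :: "nat set \<Rightarrow> (nat \<Rightarrow> nat \<Rightarrow> bool) \<Rightarrow> bool" where
  "ug_acyclic V adj \<longleftrightarrow>
     \<not> (\<exists>cs. 3 \<le> length cs \<and> distinct cs \<and> set cs \<subseteq> V \<and>
            (\<forall>k. k + 1 < length cs \<longrightarrow> adj (cs ! k) (cs ! (k + 1))) \<and>
            adj (last cs) (hd cs))"

definition ug_tree :: "nat set \<Rightarrow> (nat \<Rightarrow> nat \<Rightarrow> bool) \<Rightarrow> bool" where
  "ug_tree V adj \<longleftrightarrow> ug_connected V adj \<and> ug_acyclic V adj"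

definition directed_rooted_spanning_tree ::
  "nat set \<Rightarrow> (nat \<times> nat) set \<Rightarrow> (nat \<times> nat) set \<Rightarrow> nat \<Rightarrow> bool" where
  "directed_rooted_spanning_tree V A T r \<longleftrightarrow>
     T \<subseteq> A \<and> T \<subseteq> V \<times> V \<and> r \<in> V \<and>
     ug_tree V (\<lambda>a b. (a, b) \<in> T \<or> (b, a) \<in> T) \<and>
     (\<forall>u. (u, r) \<notin> T) \<and>
     (\<forall>v\<in>V. v \<noteq> r \<longrightarrow> (\<exists>!u. (u, v) \<in> T))"

definition has_directed_rooted_spanning_tree :: "nat \<Rightarrow> (nat \<Rightarrow> nat \<Rightarrow> real) \<Rightarrow> bool" where
  "has_directed_rooted_spanning_tree n w \<longleftrightarrow>
     (\<exists>T r. directed_rooted_spanning_tree {..<n} (dg_arcs n w) T r)"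

definition edge_orientation ::
  "nat \<Rightarrow> (nat \<Rightarrow> nat \<Rightarrow> real) \<Rightarrow> nat \<Rightarrow> (nat \<Rightarrow> nat \<times> nat) \<Rightarrow> bool" where
  "edge_orientation n w ne ep \<longleftrightarrow>
     (\<forall>l<ne. ug_adj n w (fst (ep l)) (snd (ep l))) \<and>
     bij_betw (\<lambda>l. {fst (ep l), snd (ep l)}) {..<ne} {{i, j} | i j. ug_adj n w i j}"

definition incidence_E :: "nat \<Rightarrow> nat \<Rightarrow> (nat \<Rightarrow> nat \<times> nat) \<Rightarrow> real mat" where
  "incidence_E n ne ep = mat n ne (\<lambda>(k, l).
     if k = fst (ep l) then 1 else if k = snd (ep l) then -1 else 0)"

definition weighted_F :: "nat \<Rightarrow> (nat \<Rightarrow> nat \<Rightarrow> real) \<Rightarrow> nat \<Rightarrow> (nat \<Rightarrow> nat \<times> nat) \<Rightarrow> real mat" where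
  "weighted_F n w ne ep = mat n ne (\<lambda>(k, l).
     if k = fst (ep l) then w (fst (ep l)) (snd (ep l))
     else if k = snd (ep l) then - w (snd (ep l)) (fst (ep l)) else 0)"

text \<open>Laplacian L (for reference; L = F * E^T).\<close>
definition laplacian :: "nat \<Rightarrow> (nat \<Rightarrow> nat \<Rightarrow> real) \<Rightarrow> real mat" where
  "laplacian n w = mat n n (\<lambda>(i, j).
     if i = j then (\<Sum>k\<in>{..<n} - {i}. w i k) else - w i j)"

end

theory Submission
  imports Defs
begin

context vec_space begin

lemma rank_lt_nondistinct:
  assumes "A \<in> carrier_mat n nc" and "\<not> distinct (cols A)"
  shows "rank A < nc"
proof -
  obtain S where S: "maximal S (\<lambda>T. T \<subseteq> set (cols A) \<and> lin_indpt T)"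
    using maximal_exists[of "(\<lambda>T. T \<subseteq> set (cols A) \<and> lin_indpt T)" "card (set (cols A))" "{}"]
    by (meson List.finite_set card_mono empty_iff empty_subsetI finite_lin_indpt2 rev_finite_subset)
  then have "card S \<le> card (set (cols A))" by (simp add: card_mono maximal_def)
  also have "card (set (cols A)) < length (cols A)"
    using assms(2) card_distinct card_length le_neq_implies_less by blast
  finally have "card S < nc" using assms(1) by simp
  then show ?thesis
    using rank_card_indpt[OF assms(1) S] by simp
qed

lemma rank_iff_ker:
  fixes A :: "'a mat"
  assumes A: "A \<in> carrier_mat n nc"
  shows "rank A = nc \<longleftrightarrow> (\<forall>v\<in>carrier_vec nc. A *\<^sub>v v = 0\<^sub>v n \<longrightarrow> v = 0\<^sub>v nc)"
proof
  assume r: "rank A = nc"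
  have d: "distinct (cols A)" using rank_lt_nondistinct[OF A] r by fastforce
  have li: "lin_indpt (set (cols A))"
    using full_rank_lin_indpt[OF A r d] .
  show "\<forall>v\<in>carrier_vec nc. A *\<^sub>v v = 0\<^sub>v n \<longrightarrow> v = 0\<^sub>v nc"
    using lin_depI[OF A _ _ _ d] li by blast
next
  assume k: "\<forall>v\<in>carrier_vec nc. A *\<^sub>v v = 0\<^sub>v n \<longrightarrow> v = 0\<^sub>v nc"
  have d: "distinct (cols A)"
  proof (rule ccontr)
    assume "\<not> distinct (cols A)"
    then obtain i j where ij: "i < nc" "j < nc" "i \<noteq> j" "cols A ! i = cols A ! j"
      using A by (metis distinct_conv_nth cols_length carrier_matD(2))
    define v where "v = (vec nc :: (nat \<Rightarrow> 'a) \<Rightarrow> 'a vec) (\<lambda>k. (if k = i then 1 else 0) - (if k = j then 1 else 0))"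
    have "A *\<^sub>v v = 0\<^sub>v n"
    proof (rule eq_vecI)
      fix r assume "r < dim_vec (0\<^sub>v n :: 'a vec)"
      hence r: "r < n" by simp
      have ci: "col A i $ r = col A j $ r" using ij A by (metis cols_length cols_nth carrier_matD(2))
      have "(A *\<^sub>v v) $ r = (\<Sum>k<nc. A $$ (r,k) * ((if k = i then 1 else 0) - (if k = j then 1 else 0)))"
        using A r unfolding v_def by (auto simp: mult_mat_vec_def scalar_prod_def lessThan_atLeast0 intro!: sum.cong)
      also have "\<dots> = A $$ (r,i) - A $$ (r,j)"
      proof -
        have h: "\<And>q. q < nc \<Longrightarrow> (\<Sum>k<nc. A $$ (r,k) * (if k = q then 1 else 0)) = A $$ (r,q)"
        proof -
          fix q assume "q < nc"
          have "(\<Sum>k<nc. A $$ (r,k) * (if k = q then 1 else 0)) = (\<Sum>k<nc. (if k = q then A $$ (r,k) else 0))"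
            by (rule sum.cong) auto
          also have "\<dots> = A $$ (r,q)" using \<open>q < nc\<close> by (simp add: sum.delta)
          finally show "(\<Sum>k<nc. A $$ (r,k) * (if k = q then 1 else 0)) = A $$ (r,q)" .
        qed
        show ?thesis using h[OF ij(1)] h[OF ij(2)] by (simp add: right_diff_distrib sum_subtractf)
      qed
      also have "\<dots> = 0" using ci A r ij by simp
      finally show "(A *\<^sub>v v) $ r = 0\<^sub>v n $ r" using r by simp
    qed (use A in auto)
    moreover have "v \<noteq> 0\<^sub>v nc"
    proof
      assume "v = 0\<^sub>v nc" hence "v $ i = 0" using ij by simp
      thus False using ij unfolding v_def by simp
    qed
    moreover have "v \<in> carrier_vec nc" unfolding v_def by simp
    ultimately show False using k by blast
  qed
  have li: "lin_indpt (set (cols A))"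
  proof
    assume "lin_dep (set (cols A))"
    then obtain v where "v \<in> carrier_vec nc" "v \<noteq> 0\<^sub>v nc" "A *\<^sub>v v = 0\<^sub>v n"
      using lin_depE[OF A _ d] by blast
    thus False using k by blast
  qed
  show "rank A = nc" using lin_indpt_full_rank[OF A d li] .
qed
end



definition eadj :: "(nat \<Rightarrow> nat \<times> nat) \<Rightarrow> nat set \<Rightarrow> nat \<Rightarrow> nat \<Rightarrow> bool" where
  "eadj ep I i j \<longleftrightarrow> (\<exists>l\<in>I. {i, j} = {fst (ep l), snd (ep l)})"

inductive ltree :: "(nat \<Rightarrow> nat \<times> nat) \<Rightarrow> nat set \<Rightarrow> nat set \<Rightarrow> bool" for ep where
  base: "ltree ep {x} {}"
| step: "ltree ep V I \<Longrightarrow> v \<notin> V \<Longrightarrow> u \<in> V \<Longrightarrow> l \<notin> I \<Longrightarrow> ep l = (u, v) \<or> ep l = (v, u)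
          \<Longrightarrow> ltree ep (insert v V) (insert l I)"

lemma ltree_facts:
  assumes "ltree ep V I"
  shows "finite V \<and> finite I \<and> card I + 1 = card V \<and>
         (\<forall>l\<in>I. fst (ep l) \<in> V \<and> snd (ep l) \<in> V \<and> fst (ep l) \<noteq> snd (ep l))"
  using assms
proof (induction rule: ltree.induct)
  case (base x) then show ?case by simp
next
  case (step V I v u l) then show ?case by auto
qed

definition is_path :: "nat set \<Rightarrow> (nat \<Rightarrow> nat \<Rightarrow> bool) \<Rightarrow> nat list \<Rightarrow> bool" where
  "is_path V adj cs \<longleftrightarrow> cs \<noteq> [] \<and> distinct cs \<and> set cs \<subseteq> V \<and>
     (\<forall>k. k + 1 < length cs \<longrightarrow> adj (cs ! k) (cs ! (k + 1)))"

lemma leaf_exists: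
  assumes fin: "finite V" and c2: "2 \<le> card V"
    and sym: "\<And>a b. adj a b \<Longrightarrow> adj b a"
    and irr: "\<And>a. \<not> adj a a"
    and con: "ug_connected V adj" and acy: "ug_acyclic V adj"
  shows "\<exists>v\<in>V. \<exists>u\<in>V. adj v u \<and> (\<forall>y\<in>V. adj v y \<longrightarrow> y = u)"
proof -
  obtain a b where ab: "a \<in> V" "b \<in> V" "a \<noteq> b"
    using c2 by (metis card_2_iff' card_le_Suc0_iff_eq fin not_less_eq_eq numeral_2_eq_2)
  have "(a, b) \<in> {(x, y). x \<in> V \<and> y \<in> V \<and> adj x y}\<^sup>*" using con ab unfolding ug_connected_def by blast
  then obtain z where z: "z \<in> V" "adj a z"
    using ab(3) by (cases rule: converse_rtranclE) auto
  have p2: "is_path V adj [a, z]" using z ab irr unfolding is_path_def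
    by (auto simp: less_Suc_eq) 
  have bnd: "\<forall>ps. is_path V adj ps \<longrightarrow> length ps < card V + 1"
  proof (intro allI impI)
    fix ps assume pp: "is_path V adj ps"
    have "length ps = card (set ps)" using pp unfolding is_path_def by (simp add: distinct_card)
    moreover have "card (set ps) \<le> card V" using pp unfolding is_path_def by (simp add: card_mono fin)
    ultimately have "length ps = card (set ps)" "card (set ps) \<le> card V"
      by simp_all
    thus "length ps < card V + 1" by simp
  qed
  obtain ps where ps: "is_path V adj ps" and mx: "\<forall>qs. is_path V adj qs \<longrightarrow> length qs \<le> length ps"
    using ex_has_greatest_nat[of "is_path V adj" "[a,z]" length "card V + 1", OF p2 bnd] by blast
  have l2: "2 \<le> length ps" using mx p2 by fastforce
  define v where "v = ps ! 0"
  define u where "u = ps ! 1"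
  have vV: "v \<in> V" "u \<in> V" using ps l2 unfolding is_path_def v_def u_def by auto
  have vu: "adj v u" using ps l2 unfolding is_path_def v_def u_def by auto
  have uniq: "\<forall>y\<in>V. adj v y \<longrightarrow> y = u"
  proof (intro ballI impI)
    fix y assume yV: "y \<in> V" and vy: "adj v y"
    show "y = u"
    proof (cases "y \<in> set ps")
      case False
      have "is_path V adj (y # ps)"
        using ps False yV vy sym unfolding is_path_def v_def
        by (auto simp: nth_Cons split: nat.splits)
      with mx show ?thesis by fastforce
    next
      case True
      then obtain k where k: "k < length ps" "ps ! k = y" by (metis in_set_conv_nth)
      have "k \<noteq> 0" using k vy irr unfolding v_def by (metis)
      show "y = u"
      proof (rule ccontr)
        assume "y \<noteq> u"
        hence "k \<noteq> 1" using k unfolding u_def by auto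
        hence k2: "k \<ge> 2" using \<open>k \<noteq> 0\<close> by arith
        define cs where "cs = take (k + 1) ps"
        have "3 \<le> length cs \<and> distinct cs \<and> set cs \<subseteq> V \<and>
            (\<forall>j. j + 1 < length cs \<longrightarrow> adj (cs ! j) (cs ! (j + 1))) \<and>
            adj (last cs) (hd cs)"
        proof (intro conjI)
          show "3 \<le> length cs" using k k2 unfolding cs_def by simp
          show "distinct cs" using ps unfolding cs_def is_path_def by simp
          show "set cs \<subseteq> V" using ps unfolding cs_def is_path_def by (meson order_trans set_take_subset)
          show "\<forall>j. j + 1 < length cs \<longrightarrow> adj (cs ! j) (cs ! (j + 1))"
            using ps unfolding cs_def is_path_def by auto
          have "last cs = y" using k unfolding cs_def by (simp add: take_Suc_conv_app_nth)
          moreover have "hd cs = v" using k unfolding cs_def v_def by (cases ps) auto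
          ultimately show "adj (last cs) (hd cs)" using vy sym by simp
        qed
        thus False using acy unfolding ug_acyclic_def by blast
      qed
    qed
  qed
  show ?thesis using vV vu uniq by blast
qed

lemma eadj_sym: "eadj ep I a b \<Longrightarrow> eadj ep I b a"
  unfolding eadj_def by (auto simp: insert_commute)

lemma eadj_mono: "eadj ep I a b \<Longrightarrow> I \<subseteq> J \<Longrightarrow> eadj ep J a b"
  unfolding eadj_def by blast

lemma tree_ltree:
  assumes "finite V" "V \<noteq> {}"
    and "\<forall>l\<in>I. fst (ep l) \<in> V \<and> snd (ep l) \<in> V \<and> fst (ep l) \<noteq> snd (ep l)"
    and "inj_on (\<lambda>l. {fst (ep l), snd (ep l)}) I"
    and "ug_tree V (eadj ep I)"
  shows "ltree ep V I"
  using assms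
proof (induction "card V" arbitrary: V I rule: less_induct)
  case less
  note fin = less.prems(1) and ne = less.prems(2) and E1 = less.prems(3) and E2 = less.prems(4)
    and tr = less.prems(5)
  have irr: "\<And>a. \<not> eadj ep I a a" using E1 unfolding eadj_def by (metis doubleton_eq_iff)
  have inV: "\<And>a b. eadj ep I a b \<Longrightarrow> a \<in> V \<and> b \<in> V" using E1 unfolding eadj_def
    by (metis doubleton_eq_iff)
  show ?case
  proof (cases "card V \<ge> 2")
    case False
    then have "card V = 1" using fin ne by (metis One_nat_def card_0_eq less_2_cases not_le)
    then obtain x where x: "V = {x}" using card_1_singletonE by blast
    have "I = {}" using E1 x by auto
    then show ?thesis using x ltree.base by simp
  next
    case True
    obtain v u where vu: "v \<in> V" "u \<in> V" "eadj ep I v u" and uq: "\<forall>y\<in>V. eadj ep I v y \<longrightarrow> y = u"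
      using leaf_exists[OF fin True, of "eadj ep I"] eadj_sym irr tr unfolding ug_tree_def by blast
    have uq': "\<And>y. eadj ep I v y \<Longrightarrow> y = u" using uq inV by blast
    have uq'': "\<And>y. eadj ep I y v \<Longrightarrow> y = u" using uq' eadj_sym by blast
    obtain l0 where l0: "l0 \<in> I" "{v, u} = {fst (ep l0), snd (ep l0)}" using vu unfolding eadj_def by blast
    have "u \<noteq> v" using vu irr by blast
    have l0u: "\<And>l. l \<in> I \<Longrightarrow> v = fst (ep l) \<or> v = snd (ep l) \<Longrightarrow> l = l0"
    proof -
      fix l assume l: "l \<in> I" "v = fst (ep l) \<or> v = snd (ep l)"
      then obtain y where y: "{v, y} = {fst (ep l), snd (ep l)}" by (auto simp: insert_commute)
      hence "eadj ep I v y" using l unfolding eadj_def by blast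
      hence "y = u" using uq' by blast
      hence "{fst (ep l), snd (ep l)} = {fst (ep l0), snd (ep l0)}" using y l0 by simp
      thus "l = l0" using E2 l l0 unfolding inj_on_def by blast
    qed
    define V' where "V' = V - {v}"
    define I' where "I' = I - {l0}"
    have E1': "\<forall>l\<in>I'. fst (ep l) \<in> V' \<and> snd (ep l) \<in> V' \<and> fst (ep l) \<noteq> snd (ep l)"
      using E1 l0u unfolding I'_def V'_def by blast
    have E2': "inj_on (\<lambda>l. {fst (ep l), snd (ep l)}) I'" using E2 unfolding I'_def by (rule inj_on_subset) auto
    have acy: "ug_acyclic V' (eadj ep I')"
      using tr unfolding ug_tree_def ug_acyclic_def V'_def I'_def
      using eadj_mono[of ep "I - {l0}" _ _ I] by blast
    have adj': "\<And>y z. eadj ep I y z \<Longrightarrow> y \<noteq> v \<Longrightarrow> z \<noteq> v \<Longrightarrow> eadj ep I' y z"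
    proof -
      fix y z assume a: "eadj ep I y z" "y \<noteq> v" "z \<noteq> v"
      then obtain l where l: "l \<in> I" "{y, z} = {fst (ep l), snd (ep l)}" unfolding eadj_def by blast
      have "l \<noteq> l0" using l l0 a(2,3) by (metis doubleton_eq_iff)
      thus "eadj ep I' y z" using l unfolding eadj_def I'_def by blast
    qed
    let ?R = "{(a, b). a \<in> V \<and> b \<in> V \<and> eadj ep I a b}"
    let ?R' = "{(a, b). a \<in> V' \<and> b \<in> V' \<and> eadj ep I' a b}"
    have con: "ug_connected V' (eadj ep I')"
      unfolding ug_connected_def
    proof (intro ballI)
      fix x y assume x: "x \<in> V'" and y: "y \<in> V'"
      have "(x, y) \<in> ?R\<^sup>*" using tr x y unfolding ug_tree_def ug_connected_def V'_def by blast
      have "\<And>z. (x, z) \<in> ?R\<^sup>* \<Longrightarrow> (z \<noteq> v \<longrightarrow> (x, z) \<in> ?R'\<^sup>*) \<and> (z = v \<longrightarrow> (x, u) \<in> ?R'\<^sup>*)"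
      proof -
        fix z assume "(x, z) \<in> ?R\<^sup>*"
        then show "(z \<noteq> v \<longrightarrow> (x, z) \<in> ?R'\<^sup>*) \<and> (z = v \<longrightarrow> (x, u) \<in> ?R'\<^sup>*)"
        proof (induction rule: rtrancl_induct)
          case base then show ?case using x unfolding V'_def by auto
        next
          case (step y z)
          from step.hyps(2) have yz: "y \<in> V" "z \<in> V" "eadj ep I y z" by auto
          show ?case
          proof (cases "y = v")
            case True
            then have "z = u" using uq' yz by blast
            then show ?thesis using step.IH True by auto
          next
            case False
            then have xy: "(x, y) \<in> ?R'\<^sup>*" using step.IH by auto
            show ?thesis
            proof (cases "z = v")
              case True
              then have "y = u" using uq'' yz by blast
              then show ?thesis using xy True by auto
            next
              case False
              have "(y, z) \<in> ?R'" using adj'[OF yz(3) \<open>y \<noteq> v\<close> False] yz False \<open>y \<noteq> v\<close>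
                unfolding V'_def by auto
              then show ?thesis using xy False by (meson rtrancl_into_rtrancl)
            qed
          qed
        qed
      qed
      thus "(x, y) \<in> ?R'\<^sup>*" using \<open>(x, y) \<in> ?R\<^sup>*\<close> y unfolding V'_def by auto
    qed
    have "card V' < card V" using fin vu True unfolding V'_def by simp
    moreover have "V' \<noteq> {}" using vu \<open>u \<noteq> v\<close> unfolding V'_def by auto
    ultimately have lt: "ltree ep V' I'"
      using less.hyps[of V' I'] fin E1' E2' acy con unfolding ug_tree_def V'_def by auto
    have "ep l0 = (u, v) \<or> ep l0 = (v, u)" using l0(2) by (cases "ep l0") (auto simp: doubleton_eq_iff)
    moreover have "v \<notin> V'" "u \<in> V'" "l0 \<notin> I'" using vu \<open>u \<noteq> v\<close> unfolding V'_def I'_def by auto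
    ultimately have "ltree ep (insert v V') (insert l0 I')" using lt ltree.step by blast
    moreover have "insert v V' = V" "insert l0 I' = I" using vu l0 unfolding V'_def I'_def by auto
    ultimately show ?thesis by simp
  qed
qed




definition Fe :: "(nat \<Rightarrow> nat \<Rightarrow> real) \<Rightarrow> (nat \<Rightarrow> nat \<times> nat) \<Rightarrow> nat \<Rightarrow> nat \<Rightarrow> real" where
  "Fe w ep k l = (if k = fst (ep l) then w (fst (ep l)) (snd (ep l))
     else if k = snd (ep l) then - w (snd (ep l)) (fst (ep l)) else 0)"

definition Kd :: "(nat \<Rightarrow> nat \<Rightarrow> real) \<Rightarrow> (nat \<Rightarrow> nat \<times> nat) \<Rightarrow> nat set \<Rightarrow> nat set \<Rightarrow> nat set \<Rightarrow> bool" where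
  "Kd w ep V I R \<longleftrightarrow> (\<forall>c d. (\<forall>k\<in>V. (\<Sum>l\<in>I. c l * Fe w ep k l) + (if k \<in> R then d k else 0) = 0)
      \<longrightarrow> (\<forall>l\<in>I. c l = 0) \<and> (\<forall>x\<in>R. d x = 0))"

definition hdo :: "(nat \<Rightarrow> nat \<times> nat) \<Rightarrow> (nat \<Rightarrow> bool) \<Rightarrow> nat \<Rightarrow> nat" where
  "hdo ep ori l = (if ori l then snd (ep l) else fst (ep l))"
definition tlo :: "(nat \<Rightarrow> nat \<times> nat) \<Rightarrow> (nat \<Rightarrow> bool) \<Rightarrow> nat \<Rightarrow> nat" where
  "tlo ep ori l = (if ori l then fst (ep l) else snd (ep l))"

definition Hd :: "(nat \<Rightarrow> nat \<Rightarrow> real) \<Rightarrow> (nat \<Rightarrow> nat \<times> nat) \<Rightarrow> nat set \<Rightarrow> nat set \<Rightarrow> nat set \<Rightarrow> bool" where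
  "Hd w ep V I R \<longleftrightarrow> (\<exists>ori. (\<forall>l\<in>I. 0 < w (hdo ep ori l) (tlo ep ori l)) \<and> (\<forall>l\<in>I. hdo ep ori l \<notin> R) \<and>
      (\<forall>x\<in>V - R. \<exists>!l. l \<in> I \<and> hdo ep ori l = x))"

lemma Hd_card:
  assumes lt: "ltree ep V I" and S: "S \<subseteq> V" and H: "Hd w ep V I S"
  shows "card S = 1"
proof -
  from ltree_facts[OF lt] have f: "finite V" "finite I" "card I + 1 = card V"
    and E: "\<forall>l\<in>I. fst (ep l) \<in> V \<and> snd (ep l) \<in> V" by auto
  obtain ori where o2: "\<forall>l\<in>I. hdo ep ori l \<notin> S" and o3: "\<forall>x\<in>V - S. \<exists>!l. l \<in> I \<and> hdo ep ori l = x"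
    using H unfolding Hd_def by blast
  have "bij_betw (hdo ep ori) I (V - S)"
    unfolding bij_betw_def inj_on_def
  proof (intro conjI ballI impI)
    fix l1 l2 assume l: "l1 \<in> I" "l2 \<in> I" "hdo ep ori l1 = hdo ep ori l2"
    have "hdo ep ori l1 \<in> V - S" using l o2 E unfolding hdo_def by auto
    thus "l1 = l2" using o3 l by metis
  next
    show "hdo ep ori ` I = V - S"
    proof
      show "hdo ep ori ` I \<subseteq> V - S" using o2 E unfolding hdo_def by auto
      show "V - S \<subseteq> hdo ep ori ` I" using o3 by blast
    qed
  qed
  hence "card I = card (V - S)" by (rule bij_betw_same_card)
  also have "\<dots> = card V - card S" using f S by (simp add: card_Diff_subset finite_subset)
  finally show ?thesis using f card_mono[OF f(1) S] by simp
qed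

lemma ex1_obt: "\<exists>!l. P l \<Longrightarrow> (\<And>l. P l \<Longrightarrow> (\<And>l'. P l' \<Longrightarrow> l' = l) \<Longrightarrow> thesis) \<Longrightarrow> thesis"
  by blast

context
  fixes w :: "nat \<Rightarrow> nat \<Rightarrow> real" and ep V I v u l0
  assumes lt: "ltree ep V I" and vV: "v \<notin> V" and uV: "u \<in> V" and l0I: "l0 \<notin> I"
    and epl0: "ep l0 = (u, v) \<or> ep l0 = (v, u)"
begin

lemma finV: "finite V" and finI: "finite I"
  and EV: "\<And>l. l \<in> I \<Longrightarrow> fst (ep l) \<in> V \<and> snd (ep l) \<in> V"
  using ltree_facts[OF lt] by auto

lemma uv: "u \<noteq> v" using uV vV by auto

lemma Fe_v: "l \<in> I \<Longrightarrow> Fe w ep v l = 0"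
  using EV vV unfolding Fe_def by force

lemma Fe_l0: "k \<noteq> u \<Longrightarrow> k \<noteq> v \<Longrightarrow> Fe w ep k l0 = 0"
  using epl0 unfolding Fe_def by auto

lemma Fe_v0: "Fe w ep v l0 = 0 \<longleftrightarrow> w v u = 0"
  using epl0 uv by (elim disjE; simp add: Fe_def)

lemma Fe_u0: "Fe w ep u l0 = 0 \<longleftrightarrow> w u v = 0"
  using epl0 uv by (elim disjE; simp add: Fe_def)

lemma sum_ins: "(\<Sum>l\<in>insert l0 I. c l * Fe w ep k l) = c l0 * Fe w ep k l0 + (\<Sum>l\<in>I. c l * Fe w ep k l)"
  using finI l0I by simp

lemma K_dep:
  assumes "Fe w ep v l0 = 0 \<or> v \<in> R" and "Fe w ep u l0 = 0 \<or> u \<in> R"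
  shows "\<not> Kd w ep (insert v V) (insert l0 I) R"
proof
  assume K: "Kd w ep (insert v V) (insert l0 I) R"
  define c where "c = (\<lambda>l. if l = l0 then (1::real) else 0)"
  define d where "d = (\<lambda>x. if x = v then - Fe w ep v l0 else if x = u then - Fe w ep u l0 else 0)"
  have s: "\<And>k. (\<Sum>l\<in>insert l0 I. c l * Fe w ep k l) = Fe w ep k l0"
    unfolding sum_ins using l0I by (simp add: c_def) (rule sum.neutral, auto)
  have "\<forall>k\<in>insert v V. (\<Sum>l\<in>insert l0 I. c l * Fe w ep k l) + (if k \<in> R then d k else 0) = 0"
    unfolding s using assms uv Fe_l0 by (auto simp: d_def)
  hence "c l0 = 0" using K unfolding Kd_def by blast
  thus False by (simp add: c_def)
qed

lemma K_subL:
  assumes b: "Fe w ep u l0 \<noteq> 0" and uR: "u \<notin> R" and a: "Fe w ep v l0 = 0 \<or> v \<in> R"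
    and K: "Kd w ep (insert v V) (insert l0 I) R"
  shows "Kd w ep V I (insert u (R - {v}))"
  unfolding Kd_def
proof (intro allI impI)
  fix c' d' assume rows: "\<forall>k\<in>V. (\<Sum>l\<in>I. c' l * Fe w ep k l) + (if k \<in> insert u (R - {v}) then d' k else 0) = 0"
  define c where "c = c'(l0 := d' u / Fe w ep u l0)"
  define d where "d = d'(v := - Fe w ep v l0 * c l0)"
  have cI: "\<And>l. l \<in> I \<Longrightarrow> c l = c' l" using l0I by (auto simp: c_def)
  have sI: "\<And>k. (\<Sum>l\<in>I. c l * Fe w ep k l) = (\<Sum>l\<in>I. c' l * Fe w ep k l)"
    using cI by (auto intro: sum.cong)
  have "\<forall>k\<in>insert v V. (\<Sum>l\<in>insert l0 I. c l * Fe w ep k l) + (if k \<in> R then d k else 0) = 0"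
  proof
    fix k assume k: "k \<in> insert v V"
    show "(\<Sum>l\<in>insert l0 I. c l * Fe w ep k l) + (if k \<in> R then d k else 0) = 0"
    proof (cases "k = v")
      case True
      have "(\<Sum>l\<in>I. c' l * Fe w ep k l) = 0" using True Fe_v by simp
      then show ?thesis unfolding sum_ins sI using True a by (auto simp: d_def)
    next
      case False
      hence kV: "k \<in> V" using k by simp
      show ?thesis
      proof (cases "k = u")
        case True
        have "c l0 * Fe w ep u l0 = d' u" using b by (simp add: c_def)
        then show ?thesis unfolding sum_ins sI using True rows kV uR by auto
      next
        case False
        then show ?thesis unfolding sum_ins sI using rows kV \<open>k \<noteq> v\<close> Fe_l0 by (auto simp: d_def)
      qed
    qed
  qed
  hence z: "\<forall>l\<in>insert l0 I. c l = 0" "\<forall>x\<in>R. d x = 0" using K unfolding Kd_def by blast+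
  show "(\<forall>l\<in>I. c' l = 0) \<and> (\<forall>x\<in>insert u (R - {v}). d' x = 0)"
  proof (intro conjI ballI)
    fix l assume "l \<in> I" thus "c' l = 0" using z cI by auto
  next
    fix x assume x: "x \<in> insert u (R - {v})"
    show "d' x = 0"
    proof (cases "x = u")
      case True
      have "c l0 = 0" using z by simp
      thus ?thesis using b True by (simp add: c_def)
    next
      case False thus ?thesis using x z by (auto simp: d_def)
    qed
  qed
qed

lemma K_subR:
  assumes b: "Fe w ep u l0 \<noteq> 0" and uR: "u \<notin> R"
    and K: "Kd w ep V I (insert u (R - {v}))"
    and rows: "\<forall>k\<in>insert v V. (\<Sum>l\<in>insert l0 I. c l * Fe w ep k l) + (if k \<in> R then d k else 0) = 0"
  shows "(\<forall>l\<in>insert l0 I. c l = 0) \<and> (\<forall>x\<in>R - {v}. d x = 0)"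
proof -
  define d' where "d' = d(u := c l0 * Fe w ep u l0)"
  have "\<forall>k\<in>V. (\<Sum>l\<in>I. c l * Fe w ep k l) + (if k \<in> insert u (R - {v}) then d' k else 0) = 0"
  proof
    fix k assume k: "k \<in> V"
    hence kv: "k \<noteq> v" using vV by auto
    have r: "(\<Sum>l\<in>insert l0 I. c l * Fe w ep k l) + (if k \<in> R then d k else 0) = 0" using rows k by auto
    show "(\<Sum>l\<in>I. c l * Fe w ep k l) + (if k \<in> insert u (R - {v}) then d' k else 0) = 0"
    proof (cases "k = u")
      case True thus ?thesis using r uR unfolding sum_ins by (simp add: d'_def)
    next
      case False thus ?thesis using r kv Fe_l0 unfolding sum_ins by (simp add: d'_def split: if_splits)
    qed
  qed
  hence z: "\<forall>l\<in>I. c l = 0" "\<forall>x\<in>insert u (R - {v}). d' x = 0" using K unfolding Kd_def by blast+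
  have "c l0 = 0" using z(2) b by (simp add: d'_def)
  moreover have "\<forall>x\<in>R - {v}. d x = 0"
  proof
    fix x assume x: "x \<in> R - {v}"
    hence "x \<noteq> u" using uR by auto
    moreover have "d' x = 0" using z(2) x by blast
    ultimately show "d x = 0" by (simp add: d'_def)
  qed
  ultimately show ?thesis using z by auto
qed

lemma K_caseA:
  assumes vR: "v \<in> R" and b: "Fe w ep u l0 \<noteq> 0" and uR: "u \<notin> R"
  shows "Kd w ep (insert v V) (insert l0 I) R \<longleftrightarrow> Kd w ep V I (insert u (R - {v}))"
proof
  assume "Kd w ep (insert v V) (insert l0 I) R"
  thus "Kd w ep V I (insert u (R - {v}))" using K_subL b uR vR by blast
next
  assume K: "Kd w ep V I (insert u (R - {v}))"
  show "Kd w ep (insert v V) (insert l0 I) R"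
    unfolding Kd_def
  proof (intro allI impI)
    fix c d assume rows: "\<forall>k\<in>insert v V. (\<Sum>l\<in>insert l0 I. c l * Fe w ep k l) + (if k \<in> R then d k else 0) = 0"
    have z: "(\<forall>l\<in>insert l0 I. c l = 0) \<and> (\<forall>x\<in>R - {v}. d x = 0)" using K_subR[OF b uR K rows] .
    have "(\<Sum>l\<in>insert l0 I. c l * Fe w ep v l) + d v = 0" using rows vR by auto
    moreover have "(\<Sum>l\<in>insert l0 I. c l * Fe w ep v l) = 0" by (rule sum.neutral) (use z in auto)
    ultimately have "d v = 0" by simp
    thus "(\<forall>l\<in>insert l0 I. c l = 0) \<and> (\<forall>x\<in>R. d x = 0)" using z by auto
  qed
qed

lemma K_caseD:
  assumes a: "Fe w ep v l0 \<noteq> 0" and vR: "v \<notin> R"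
  shows "Kd w ep (insert v V) (insert l0 I) R \<longleftrightarrow> Kd w ep V I R"
proof
  assume K: "Kd w ep (insert v V) (insert l0 I) R"
  show "Kd w ep V I R" unfolding Kd_def
  proof (intro allI impI)
    fix c d assume rows: "\<forall>k\<in>V. (\<Sum>l\<in>I. c l * Fe w ep k l) + (if k \<in> R then d k else 0) = 0"
    define c' where "c' = c(l0 := 0)"
    have cI: "\<And>l. l \<in> I \<Longrightarrow> c' l = c l" using l0I by (auto simp: c'_def)
    have sI: "\<And>k. (\<Sum>l\<in>I. c' l * Fe w ep k l) = (\<Sum>l\<in>I. c l * Fe w ep k l)"
      using cI by (auto intro: sum.cong)
    have "\<forall>k\<in>insert v V. (\<Sum>l\<in>insert l0 I. c' l * Fe w ep k l) + (if k \<in> R then d k else 0) = 0"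
      using rows vR Fe_v unfolding sum_ins sI by (auto simp: c'_def)
    hence "(\<forall>l\<in>insert l0 I. c' l = 0) \<and> (\<forall>x\<in>R. d x = 0)" using K unfolding Kd_def by blast
    thus "(\<forall>l\<in>I. c l = 0) \<and> (\<forall>x\<in>R. d x = 0)" using cI by auto
  qed
next
  assume K: "Kd w ep V I R"
  show "Kd w ep (insert v V) (insert l0 I) R" unfolding Kd_def
  proof (intro allI impI)
    fix c d assume rows: "\<forall>k\<in>insert v V. (\<Sum>l\<in>insert l0 I. c l * Fe w ep k l) + (if k \<in> R then d k else 0) = 0"
    have "c l0 * Fe w ep v l0 = 0" using rows vR Fe_v unfolding sum_ins by auto
    hence c0: "c l0 = 0" using a by simp
    have "\<forall>k\<in>V. (\<Sum>l\<in>I. c l * Fe w ep k l) + (if k \<in> R then d k else 0) = 0"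
      using rows c0 unfolding sum_ins by auto
    hence "(\<forall>l\<in>I. c l = 0) \<and> (\<forall>x\<in>R. d x = 0)" using K unfolding Kd_def by blast
    thus "(\<forall>l\<in>insert l0 I. c l = 0) \<and> (\<forall>x\<in>R. d x = 0)" using c0 by auto
  qed
qed


lemma hd_l0: "(hdo ep ori l0 = u \<and> tlo ep ori l0 = v) \<or> (hdo ep ori l0 = v \<and> tlo ep ori l0 = u)"
  using epl0 by (elim disjE; simp add: hdo_def tlo_def)

lemma set_l0: "x = u \<or> x = v \<Longrightarrow> hdo ep (ori(l0 := (snd (ep l0) = x))) l0 = x \<and>
    tlo ep (ori(l0 := (snd (ep l0) = x))) l0 = (if x = u then v else u)"
  using epl0 uv by (elim disjE; elim disjE; auto simp: hdo_def tlo_def)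

lemma hd_I: "l \<in> I \<Longrightarrow> hdo ep ori l \<in> V"
  using EV unfolding hdo_def by auto

lemma upd_I: "l \<in> I \<Longrightarrow> hdo ep (ori(l0 := b)) l = hdo ep ori l \<and> tlo ep (ori(l0 := b)) l = tlo ep ori l"
  using l0I unfolding hdo_def tlo_def by auto

lemma H_caseD:
  assumes vR: "v \<notin> R"
  shows "Hd w ep (insert v V) (insert l0 I) R \<longleftrightarrow> 0 < w v u \<and> Hd w ep V I R"
proof
  assume "Hd w ep (insert v V) (insert l0 I) R"
  then obtain ori where o1: "\<forall>l\<in>insert l0 I. 0 < w (hdo ep ori l) (tlo ep ori l)"
    and o2: "\<forall>l\<in>insert l0 I. hdo ep ori l \<notin> R"
    and o3: "\<forall>x\<in>insert v V - R. \<exists>!l. l \<in> insert l0 I \<and> hdo ep ori l = x"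
    unfolding Hd_def by blast
  have vm: "v \<in> insert v V - R" using vR by simp
  obtain l where l: "l \<in> insert l0 I" "hdo ep ori l = v" using ex1_implies_ex[OF bspec[OF o3 vm]] by blast
  have "l = l0" using l hd_I[of l ori] vV by auto
  hence h0: "hdo ep ori l0 = v" "tlo ep ori l0 = u" using l hd_l0[of ori] uv by auto
  have "0 < w v u" using o1 h0 by auto
  moreover have "Hd w ep V I R" unfolding Hd_def
  proof (intro exI[of _ ori] conjI ballI)
    fix x assume x: "x \<in> V - R"
    hence "x \<noteq> v" using vV by auto
    have xm: "x \<in> insert v V - R" using x by auto
    obtain l where "l \<in> insert l0 I" "hdo ep ori l = x"
      and uq: "\<And>l'. l' \<in> insert l0 I \<and> hdo ep ori l' = x \<Longrightarrow> l' = l"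
      using ex1_obt[OF bspec[OF o3 xm]] by blast
    moreover have "l \<noteq> l0" using h0 \<open>hdo ep ori l = x\<close> \<open>x \<noteq> v\<close> by auto
    ultimately show "\<exists>!l. l \<in> I \<and> hdo ep ori l = x"
      by (intro ex1I[of _ l]) auto
  qed (use o1 o2 in auto)
  ultimately show "0 < w v u \<and> Hd w ep V I R" by simp
next
  assume "0 < w v u \<and> Hd w ep V I R"
  then obtain ori where a: "0 < w v u" and o1: "\<forall>l\<in>I. 0 < w (hdo ep ori l) (tlo ep ori l)"
    and o2: "\<forall>l\<in>I. hdo ep ori l \<notin> R"
    and o3: "\<forall>x\<in>V - R. \<exists>!l. l \<in> I \<and> hdo ep ori l = x"
    unfolding Hd_def by blast
  define ori' where "ori' = ori(l0 := (snd (ep l0) = v))"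
  have h0: "hdo ep ori' l0 = v" "tlo ep ori' l0 = u" using set_l0[of v ori] uv unfolding ori'_def by auto
  have hI: "\<And>l. l \<in> I \<Longrightarrow> hdo ep ori' l = hdo ep ori l \<and> tlo ep ori' l = tlo ep ori l"
    unfolding ori'_def using upd_I by blast
  show "Hd w ep (insert v V) (insert l0 I) R" unfolding Hd_def
  proof (intro exI[of _ ori'] conjI ballI)
    fix l assume "l \<in> insert l0 I"
    thus "0 < w (hdo ep ori' l) (tlo ep ori' l)" using h0 a o1 hI by auto
  next
    fix l assume "l \<in> insert l0 I"
    thus "hdo ep ori' l \<notin> R" using h0 vR o2 hI by auto
  next
    fix x assume x: "x \<in> insert v V - R"
    show "\<exists>!l. l \<in> insert l0 I \<and> hdo ep ori' l = x"
    proof (cases "x = v")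
      case True
      have nv: "\<And>l. l \<in> I \<Longrightarrow> hdo ep ori' l \<noteq> v" using hI hd_I vV by metis
      show ?thesis
      proof (rule ex1I[of _ l0])
        show "l0 \<in> insert l0 I \<and> hdo ep ori' l0 = x" using True h0 by simp
      next
        fix l' assume "l' \<in> insert l0 I \<and> hdo ep ori' l' = x"
        thus "l' = l0" using nv True by auto
      qed
    next
      case False
      hence xV: "x \<in> V - R" using x by auto
      obtain l where "l \<in> I" "hdo ep ori l = x"
        and uq: "\<And>l'. l' \<in> I \<and> hdo ep ori l' = x \<Longrightarrow> l' = l"
        using ex1_obt[OF bspec[OF o3 xV]] by blast
      show ?thesis
      proof (rule ex1I[of _ l])
        show "l \<in> insert l0 I \<and> hdo ep ori' l = x" using \<open>l \<in> I\<close> \<open>hdo ep ori l = x\<close> hI by auto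
      next
        fix l' assume l': "l' \<in> insert l0 I \<and> hdo ep ori' l' = x"
        have "l' \<noteq> l0" using l' h0 False \<open>x \<noteq> v\<close> by auto
        hence "l' \<in> I" using l' by simp
        thus "l' = l" using uq l' hI by auto
      qed
    qed
  qed
qed

lemma H_caseA:
  assumes vR: "v \<in> R"
  shows "Hd w ep (insert v V) (insert l0 I) R \<longleftrightarrow> 0 < w u v \<and> u \<notin> R \<and> Hd w ep V I (insert u (R - {v}))"
proof
  assume "Hd w ep (insert v V) (insert l0 I) R"
  then obtain ori where o1: "\<forall>l\<in>insert l0 I. 0 < w (hdo ep ori l) (tlo ep ori l)"
    and o2: "\<forall>l\<in>insert l0 I. hdo ep ori l \<notin> R"
    and o3: "\<forall>x\<in>insert v V - R. \<exists>!l. l \<in> insert l0 I \<and> hdo ep ori l = x"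
    unfolding Hd_def by blast
  have h0: "hdo ep ori l0 = u" "tlo ep ori l0 = v" using o2 vR hd_l0[of ori] by auto
  have uR: "u \<notin> R" using o2 h0 by auto
  have b: "0 < w u v" using o1 h0 by auto
  have nu: "\<And>l. l \<in> I \<Longrightarrow> hdo ep ori l \<noteq> u"
  proof
    fix l assume l: "l \<in> I" "hdo ep ori l = u"
    have "u \<in> insert v V - R" using uV uR by auto
    hence "\<exists>!l. l \<in> insert l0 I \<and> hdo ep ori l = u" using o3 by blast
    hence "l = l0" using l h0 by blast
    thus False using l l0I by simp
  qed
  have "Hd w ep V I (insert u (R - {v}))" unfolding Hd_def
  proof (intro exI[of _ ori] conjI ballI)
    fix l assume "l \<in> I" thus "hdo ep ori l \<notin> insert u (R - {v})" using nu o2 by auto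
  next
    fix x assume x: "x \<in> V - insert u (R - {v})"
    hence xm: "x \<in> insert v V - R" "x \<noteq> u" using vV by auto
    obtain l where "l \<in> insert l0 I" "hdo ep ori l = x"
      and uq: "\<And>l'. l' \<in> insert l0 I \<and> hdo ep ori l' = x \<Longrightarrow> l' = l"
      using ex1_obt[OF bspec[OF o3 xm(1)]] by blast
    moreover have "l \<noteq> l0" using h0 \<open>hdo ep ori l = x\<close> \<open>x \<noteq> u\<close> by auto
    ultimately show "\<exists>!l. l \<in> I \<and> hdo ep ori l = x"
      by (intro ex1I[of _ l]) auto
  qed (use o1 in auto)
  thus "0 < w u v \<and> u \<notin> R \<and> Hd w ep V I (insert u (R - {v}))" using uR b by simp
next
  assume "0 < w u v \<and> u \<notin> R \<and> Hd w ep V I (insert u (R - {v}))"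
  then obtain ori where b: "0 < w u v" and uR: "u \<notin> R" and o1: "\<forall>l\<in>I. 0 < w (hdo ep ori l) (tlo ep ori l)"
    and o2: "\<forall>l\<in>I. hdo ep ori l \<notin> insert u (R - {v})"
    and o3: "\<forall>x\<in>V - insert u (R - {v}). \<exists>!l. l \<in> I \<and> hdo ep ori l = x"
    unfolding Hd_def by blast
  define ori' where "ori' = ori(l0 := (snd (ep l0) = u))"
  have h0: "hdo ep ori' l0 = u" "tlo ep ori' l0 = v" using set_l0[of u ori] uv unfolding ori'_def by auto
  have hI: "\<And>l. l \<in> I \<Longrightarrow> hdo ep ori' l = hdo ep ori l \<and> tlo ep ori' l = tlo ep ori l"
    unfolding ori'_def using upd_I by blast
  show "Hd w ep (insert v V) (insert l0 I) R" unfolding Hd_def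
  proof (intro exI[of _ ori'] conjI ballI)
    fix l assume "l \<in> insert l0 I"
    thus "0 < w (hdo ep ori' l) (tlo ep ori' l)" using h0 b o1 hI by auto
  next
    fix l assume l: "l \<in> insert l0 I"
    show "hdo ep ori' l \<notin> R"
    proof (cases "l = l0")
      case True thus ?thesis using h0 uR by simp
    next
      case False
      hence "l \<in> I" using l by simp
      hence "hdo ep ori l \<noteq> v" using hd_I vV by metis
      thus ?thesis using o2 hI \<open>l \<in> I\<close> by auto
    qed
  next
    fix x assume x: "x \<in> insert v V - R"
    hence xV: "x \<in> V" using vR by auto
    show "\<exists>!l. l \<in> insert l0 I \<and> hdo ep ori' l = x"
    proof (cases "x = u")
      case True
      have nv: "\<And>l. l \<in> I \<Longrightarrow> hdo ep ori' l \<noteq> u" using hI o2 by auto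
      show ?thesis
      proof (rule ex1I[of _ l0])
        show "l0 \<in> insert l0 I \<and> hdo ep ori' l0 = x" using True h0 by simp
      next
        fix l' assume "l' \<in> insert l0 I \<and> hdo ep ori' l' = x"
        thus "l' = l0" using nv True by auto
      qed
    next
      case False
      hence xV': "x \<in> V - insert u (R - {v})" using x xV by auto
      obtain l where "l \<in> I" "hdo ep ori l = x"
        and uq: "\<And>l'. l' \<in> I \<and> hdo ep ori l' = x \<Longrightarrow> l' = l"
        using ex1_obt[OF bspec[OF o3 xV']] by blast
      show ?thesis
      proof (rule ex1I[of _ l])
        show "l \<in> insert l0 I \<and> hdo ep ori' l = x" using \<open>l \<in> I\<close> \<open>hdo ep ori l = x\<close> hI by auto
      next
        fix l' assume l': "l' \<in> insert l0 I \<and> hdo ep ori' l' = x"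
        have "l' \<noteq> l0" using l' h0 False \<open>x \<noteq> u\<close> by auto
        hence "l' \<in> I" using l' by simp
        thus "l' = l" using uq l' hI by auto
      qed
    qed
  qed
qed

end




lemma main_ind:
  assumes "ltree ep V I"
    and "\<forall>l\<in>I. 0 \<le> w (fst (ep l)) (snd (ep l)) \<and> 0 \<le> w (snd (ep l)) (fst (ep l)) \<and>
              0 < w (fst (ep l)) (snd (ep l)) + w (snd (ep l)) (fst (ep l))"
  shows "(\<forall>R. R \<subseteq> V \<longrightarrow> R \<noteq> {} \<longrightarrow> (Kd w ep V I R \<longleftrightarrow> Hd w ep V I R)) \<and>
         (Kd w ep V I {} \<longleftrightarrow> (\<exists>x\<in>V. Hd w ep V I {x}))"
  using assms
proof (induction rule: ltree.induct)
  case (base x)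
  have K: "Kd w ep {x} {} R" if "R \<subseteq> {x}" for R
    using that unfolding Kd_def by auto
  have H: "Hd w ep {x} {} {x}" unfolding Hd_def by auto
  have "R \<subseteq> {x} \<Longrightarrow> R \<noteq> {} \<Longrightarrow> R = {x}" for R by auto
  then show ?case using K H by auto
next
  case (step V I v u l0)
  note S = step.hyps(1-5)
  have W: "\<forall>l\<in>I. 0 \<le> w (fst (ep l)) (snd (ep l)) \<and> 0 \<le> w (snd (ep l)) (fst (ep l)) \<and>
              0 < w (fst (ep l)) (snd (ep l)) + w (snd (ep l)) (fst (ep l))" using step.prems by auto
  have IH1: "\<And>R. R \<subseteq> V \<Longrightarrow> R \<noteq> {} \<Longrightarrow> Kd w ep V I R \<longleftrightarrow> Hd w ep V I R" using step.IH W by blast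
  have IH2: "Kd w ep V I {} \<longleftrightarrow> (\<exists>x\<in>V. Hd w ep V I {x})" using step.IH W by blast
  have W0: "0 \<le> w v u" "0 \<le> w u v" "0 < w v u + w u v" using step.prems S(5) by auto
  have uv: "u \<noteq> v" using S by auto
  have a0: "Fe w ep v l0 = 0 \<longleftrightarrow> w v u = 0" using Fe_v0[OF S] .
  have b0: "Fe w ep u l0 = 0 \<longleftrightarrow> w u v = 0" using Fe_u0[OF S] .
  have fin: "finite V" using ltree_facts[OF S(1)] by simp
  have P1: "Kd w ep (insert v V) (insert l0 I) R \<longleftrightarrow> Hd w ep (insert v V) (insert l0 I) R"
    if R: "R \<subseteq> insert v V" "R \<noteq> {}" for R
  proof (cases "v \<in> R")
    case True
    show ?thesis
    proof (cases "0 < w u v \<and> u \<notin> R")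
      case True2: True
      have bn: "Fe w ep u l0 \<noteq> 0" using b0 True2 by simp
      have "Kd w ep (insert v V) (insert l0 I) R \<longleftrightarrow> Kd w ep V I (insert u (R - {v}))"
        using K_caseA[OF S True bn] True2 by simp
      also have "\<dots> \<longleftrightarrow> Hd w ep V I (insert u (R - {v}))"
        by (rule IH1) (use R S in auto)
      also have "\<dots> \<longleftrightarrow> Hd w ep (insert v V) (insert l0 I) R" using H_caseA[OF S True] True2 by simp
      finally show ?thesis .
    next
      case False
      have "Fe w ep u l0 = 0 \<or> u \<in> R" using False b0 W0 by auto
      hence "\<not> Kd w ep (insert v V) (insert l0 I) R" using K_dep[OF S] True by blast
      moreover have "\<not> Hd w ep (insert v V) (insert l0 I) R" using H_caseA[OF S True] False by blast
      ultimately show ?thesis by simp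
    qed
  next
    case False
    hence RV: "R \<subseteq> V" using R by auto
    show ?thesis
    proof (cases "0 < w v u")
      case True
      have an: "Fe w ep v l0 \<noteq> 0" using a0 True by simp
      show ?thesis using K_caseD[OF S an False] H_caseD[OF S False] IH1[OF RV R(2)] True by simp
    next
      case aF: False
      have "\<not> Hd w ep (insert v V) (insert l0 I) R" using H_caseD[OF S False] aF by simp
      moreover have "\<not> Kd w ep (insert v V) (insert l0 I) R"
      proof (cases "u \<in> R")
        case True thus ?thesis using K_dep[OF S] a0 aF W0 by auto
      next
        case uR: False
        show ?thesis
        proof
          assume K: "Kd w ep (insert v V) (insert l0 I) R"
          have bn: "Fe w ep u l0 \<noteq> 0" using b0 aF W0 by auto
          have "Kd w ep V I (insert u (R - {v}))" using K_subL[OF S bn uR _ K] a0 aF W0 by auto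
          hence "Kd w ep V I (insert u R)" using False by simp
          hence "Hd w ep V I (insert u R)" using IH1[of "insert u R"] RV S by auto
          hence "card (insert u R) = 1" using Hd_card[OF S(1)] RV S by auto
          moreover have "finite R" using RV fin finite_subset by blast
          ultimately have "R = {}" using uR by simp
          thus False using R by simp
        qed
      qed
      ultimately show ?thesis by simp
    qed
  qed
  have P2: "Kd w ep (insert v V) (insert l0 I) {} \<longleftrightarrow> (\<exists>x\<in>insert v V. Hd w ep (insert v V) (insert l0 I) {x})"
  proof (cases "0 < w v u")
    case True
    have an: "Fe w ep v l0 \<noteq> 0" using a0 True by simp
    have "Kd w ep (insert v V) (insert l0 I) {} \<longleftrightarrow> (\<exists>x\<in>V. Hd w ep V I {x})"
      using K_caseD[OF S an] IH2 by simp
    also have "\<dots> \<longleftrightarrow> (\<exists>x\<in>insert v V. Hd w ep (insert v V) (insert l0 I) {x})"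
    proof
      assume "\<exists>x\<in>V. Hd w ep V I {x}"
      then obtain x where x: "x \<in> V" "Hd w ep V I {x}" by blast
      hence "x \<noteq> v" using S by auto
      thus "\<exists>x\<in>insert v V. Hd w ep (insert v V) (insert l0 I) {x}"
        using H_caseD[OF S, of "{x}"] x True by auto
    next
      assume "\<exists>x\<in>insert v V. Hd w ep (insert v V) (insert l0 I) {x}"
      then obtain x where x: "x \<in> insert v V" "Hd w ep (insert v V) (insert l0 I) {x}" by blast
      show "\<exists>x\<in>V. Hd w ep V I {x}"
      proof (cases "x = v")
        case True
        have "Hd w ep V I {u}" using H_caseA[OF S, of "{v}"] x True uv by simp
        thus ?thesis using S by blast
      next
        case False
        thus ?thesis using H_caseD[OF S, of "{x}"] x by auto
      qed
    qed
    finally show ?thesis .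
  next
    case aF: False
    have bn: "Fe w ep u l0 \<noteq> 0" using b0 aF W0 by auto
    have "Kd w ep (insert v V) (insert l0 I) {} \<longleftrightarrow> Kd w ep V I {u}"
    proof
      assume K: "Kd w ep (insert v V) (insert l0 I) {}"
      show "Kd w ep V I {u}" using K_subL[OF S bn _ _ K] a0 aF W0 by auto
    next
      assume K: "Kd w ep V I {u}"
      show "Kd w ep (insert v V) (insert l0 I) {}"
        unfolding Kd_def
      proof (intro allI impI)
        fix c d assume rows: "\<forall>k\<in>insert v V. (\<Sum>l\<in>insert l0 I. c l * Fe w ep k l) + (if k \<in> {} then d k else 0) = 0"
        have "Kd w ep V I (insert u ({} - {v}))" using K by simp
        from K_subR[OF S bn _ this rows] show "(\<forall>l\<in>insert l0 I. c l = 0) \<and> (\<forall>x\<in>{}. d x = 0)" by simp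
      qed
    qed
    also have "\<dots> \<longleftrightarrow> Hd w ep V I {u}" using IH1[of "{u}"] S by auto
    also have "\<dots> \<longleftrightarrow> Hd w ep (insert v V) (insert l0 I) {v}" using H_caseA[OF S, of "{v}"] uv aF W0 by auto
    also have "\<dots> \<longleftrightarrow> (\<exists>x\<in>insert v V. Hd w ep (insert v V) (insert l0 I) {x})"
    proof
      assume "\<exists>x\<in>insert v V. Hd w ep (insert v V) (insert l0 I) {x}"
      then obtain x where x: "x \<in> insert v V" "Hd w ep (insert v V) (insert l0 I) {x}" by blast
      have "x = v"
      proof (rule ccontr)
        assume "x \<noteq> v"
        thus False using H_caseD[OF S, of "{x}"] x aF by auto
      qed
      thus "Hd w ep (insert v V) (insert l0 I) {v}" using x by simp
    qed auto
    finally show ?thesis .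
  qed
  show ?case using P1 P2 by blast
qed


definition arcs :: "(nat \<Rightarrow> nat \<Rightarrow> real) \<Rightarrow> (nat \<Rightarrow> nat \<times> nat) \<Rightarrow> nat set \<Rightarrow> (nat \<times> nat) set" where
  "arcs w ep I = {(i, j). eadj ep I i j \<and> 0 < w j i}"

lemma reach_H:
  assumes "ltree ep V I" and "r \<in> V" and "\<forall>x\<in>V. (r, x) \<in> (arcs w ep I)\<^sup>*"
  shows "Hd w ep V I {r}"
  using assms
proof (induction arbitrary: r rule: ltree.induct)
  case (base x)
  thus ?case unfolding Hd_def by auto
next
  case (step V I v u l0)
  note S = step.hyps(1-5)
  have uv: "u \<noteq> v" using S by auto
  have EVI: "\<And>l. l \<in> I \<Longrightarrow> fst (ep l) \<in> V \<and> snd (ep l) \<in> V" using ltree_facts[OF S(1)] by auto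
  have l0s: "{fst (ep l0), snd (ep l0)} = {u, v}" using S(5) by auto
  have adjv: "\<And>y. eadj ep (insert l0 I) y v \<Longrightarrow> y = u"
  proof -
    fix y assume "eadj ep (insert l0 I) y v"
    then obtain l where l: "l \<in> insert l0 I" "{y, v} = {fst (ep l), snd (ep l)}" unfolding eadj_def by blast
    have "l = l0" using l EVI S(2) by (metis doubleton_eq_iff insert_iff)
    thus "y = u" using l l0s uv by (metis doubleton_eq_iff)
  qed
  have adjv': "\<And>z. eadj ep (insert l0 I) v z \<Longrightarrow> z = u" using adjv eadj_sym by blast
  have adjI: "\<And>y z. eadj ep (insert l0 I) y z \<Longrightarrow> y \<noteq> v \<Longrightarrow> z \<noteq> v \<Longrightarrow> eadj ep I y z"
  proof -
    fix y z assume a: "eadj ep (insert l0 I) y z" "y \<noteq> v" "z \<noteq> v"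
    then obtain l where l: "l \<in> insert l0 I" "{y, z} = {fst (ep l), snd (ep l)}" unfolding eadj_def by blast
    have "l \<noteq> l0" using l l0s a(2,3) by (metis doubleton_eq_iff)
    thus "eadj ep I y z" using l unfolding eadj_def by auto
  qed
  let ?A = "arcs w ep I" and ?A1 = "arcs w ep (insert l0 I)"
  show ?case
  proof (cases "r = v")
    case False
    hence rV: "r \<in> V" using step.prems by auto
    have cl: "(z \<noteq> v \<longrightarrow> (r, z) \<in> ?A\<^sup>*) \<and> (z = v \<longrightarrow> (r, u) \<in> ?A\<^sup>*)" if "(r, z) \<in> ?A1\<^sup>*" for z
      using that
    proof (induction rule: rtrancl_induct)
      case base thus ?case using False by auto
    next
      case (step y z)
      have yz: "eadj ep (insert l0 I) y z" using step.hyps(2) unfolding arcs_def by auto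
      show ?case
      proof (cases "y = v")
        case True thus ?thesis using adjv'[OF yz[unfolded True]] step.IH uv by auto
      next
        case yv: False
        hence ry: "(r, y) \<in> ?A\<^sup>*" using step.IH by auto
        show ?thesis
        proof (cases "z = v")
          case True thus ?thesis using adjv[OF yz[unfolded True]] ry by auto
        next
          case False
          have "(y, z) \<in> ?A" using adjI[OF yz yv False] step.hyps(2) unfolding arcs_def by auto
          thus ?thesis using ry False by (meson rtrancl_into_rtrancl)
        qed
      qed
    qed
    have "\<forall>x\<in>V. (r, x) \<in> ?A\<^sup>*" using cl step.prems S(2) by (metis insert_iff)
    hence H: "Hd w ep V I {r}" using step.IH rV by blast
    have "(r, v) \<in> ?A1\<^sup>*" using step.prems by auto
    then obtain y where "(y, v) \<in> ?A1" using False by (cases rule: rtranclE) auto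
    hence "y = u" "0 < w v y" using adjv unfolding arcs_def by auto
    hence "0 < w v u" by simp
    thus ?thesis using H_caseD[OF S, of "{r}"] H False by auto
  next
    case True
    have cl: "z = v \<or> (u, z) \<in> ?A\<^sup>*" if "(v, z) \<in> ?A1\<^sup>*" for z
      using that
    proof (induction rule: rtrancl_induct)
      case base thus ?case by auto
    next
      case (step y z)
      have yz: "eadj ep (insert l0 I) y z" using step.hyps(2) unfolding arcs_def by auto
      show ?case
      proof (cases "y = v")
        case True thus ?thesis using adjv'[OF yz[unfolded True]] by auto
      next
        case yv: False
        hence ry: "(u, y) \<in> ?A\<^sup>*" using step.IH by auto
        show ?thesis
        proof (cases "z = v")
          case True thus ?thesis by auto
        next
          case False
          have "(y, z) \<in> ?A" using adjI[OF yz yv False] step.hyps(2) unfolding arcs_def by auto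
          thus ?thesis using ry False by (meson rtrancl_into_rtrancl)
        qed
      qed
    qed
    have "\<forall>x\<in>V. (u, x) \<in> ?A\<^sup>*" using cl step.prems S(2) True by (metis insert_iff)
    hence H: "Hd w ep V I {u}" using step.IH S(3) by blast
    have "(v, u) \<in> ?A1\<^sup>*" using step.prems S(3) True by auto
    then obtain y where "(v, y) \<in> ?A1" using uv by (cases rule: converse_rtranclE) auto
    hence "y = u" "0 < w y v" using adjv' unfolding arcs_def by auto
    hence "0 < w u v" by simp
    thus ?thesis using H_caseA[OF S, of "{v}"] H True uv by auto
  qed
qed




theorem lemma3:
  fixes n ne :: nat and w :: "nat \<Rightarrow> nat \<Rightarrow> real" and ep :: "nat \<Rightarrow> nat \<times> nat"
  assumes "n \<ge> 2"
    and "\<forall>i<n. \<forall>j<n. i \<noteq> j \<longrightarrow> w i j \<ge> 0"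
    and "ug_tree {..<n} (ug_adj n w)"
    and "edge_orientation n w ne ep"
  shows "vec_space.rank n (weighted_F n w ne ep) = n - 1
         \<longleftrightarrow> has_directed_rooted_spanning_tree n w"
proof -
  define V where "V = {..<n}"
  define I where "I = {..<ne}"
  have eo1: "\<forall>l<ne. ug_adj n w (fst (ep l)) (snd (ep l))"
    and eo2: "bij_betw (\<lambda>l. {fst (ep l), snd (ep l)}) {..<ne} {{i, j} | i j. ug_adj n w i j}"
    using assms(4) unfolding edge_orientation_def by auto
  have E1: "\<forall>l\<in>I. fst (ep l) \<in> V \<and> snd (ep l) \<in> V \<and> fst (ep l) \<noteq> snd (ep l)"
    using eo1 unfolding I_def V_def ug_adj_def by auto
  have E2: "inj_on (\<lambda>l. {fst (ep l), snd (ep l)}) I"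
    using eo2 unfolding I_def by (rule bij_betw_imp_inj_on)
  have ugsym: "\<And>i j. ug_adj n w i j \<Longrightarrow> ug_adj n w j i" unfolding ug_adj_def by auto
  have adjeq: "ug_adj n w = eadj ep I"
  proof (intro ext iffI)
    fix i j assume a: "ug_adj n w i j"
    hence "{i, j} \<in> {{i, j} | i j. ug_adj n w i j}" by blast
    then obtain l where "l < ne" "{fst (ep l), snd (ep l)} = {i, j}"
      using bij_betw_imp_surj_on[OF eo2] by (metis (no_types, lifting) imageE lessThan_iff)
    thus "eadj ep I i j" unfolding eadj_def I_def by auto
  next
    fix i j assume "eadj ep I i j"
    then obtain l where l: "l < ne" "{i, j} = {fst (ep l), snd (ep l)}" unfolding eadj_def I_def by auto
    have "ug_adj n w (fst (ep l)) (snd (ep l))" using eo1 l by auto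
    thus "ug_adj n w i j" using l(2) ugsym by (metis doubleton_eq_iff)
  qed
  have tree: "ug_tree V (eadj ep I)" using assms(3) adjeq unfolding V_def by simp
  have lt: "ltree ep V I"
  proof (rule tree_ltree)
    have "0 \<in> V" using assms(1) unfolding V_def by simp
    thus "V \<noteq> {}" by blast
  qed (use E1 E2 tree in \<open>auto simp: V_def\<close>)
  have cnt: "ne + 1 = n" using ltree_facts[OF lt] unfolding V_def I_def by simp
  have W: "\<forall>l\<in>I. 0 \<le> w (fst (ep l)) (snd (ep l)) \<and> 0 \<le> w (snd (ep l)) (fst (ep l)) \<and>
              0 < w (fst (ep l)) (snd (ep l)) + w (snd (ep l)) (fst (ep l))"
    using eo1 assms(2) unfolding I_def ug_adj_def by auto
  have main: "Kd w ep V I {} \<longleftrightarrow> (\<exists>x\<in>V. Hd w ep V I {x})"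
    using main_ind[OF lt W] by blast
  have Fc: "weighted_F n w ne ep \<in> carrier_mat n ne" unfolding weighted_F_def by simp
  have Fentry: "\<And>k l. k < n \<Longrightarrow> l < ne \<Longrightarrow> weighted_F n w ne ep $$ (k, l) = Fe w ep k l"
    unfolding weighted_F_def Fe_def by simp
  have mv: "\<And>v k. v \<in> carrier_vec ne \<Longrightarrow> k < n \<Longrightarrow>
      (weighted_F n w ne ep *\<^sub>v v) $ k = (\<Sum>l\<in>I. v $ l * Fe w ep k l)"
  proof -
    fix v :: "real vec" and k assume v: "v \<in> carrier_vec ne" and k: "k < n"
    have "(weighted_F n w ne ep *\<^sub>v v) $ k = (\<Sum>l\<in>{0..<ne}. weighted_F n w ne ep $$ (k, l) * v $ l)"
      using v k Fc by (simp add: mult_mat_vec_def scalar_prod_def)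
    also have "\<dots> = (\<Sum>l\<in>I. v $ l * Fe w ep k l)"
      unfolding I_def using Fentry k by (auto simp: lessThan_atLeast0 intro!: sum.cong)
    finally show "(weighted_F n w ne ep *\<^sub>v v) $ k = (\<Sum>l\<in>I. v $ l * Fe w ep k l)" .
  qed
  have kerK: "(\<forall>v\<in>carrier_vec ne. weighted_F n w ne ep *\<^sub>v v = 0\<^sub>v n \<longrightarrow> v = 0\<^sub>v ne) \<longleftrightarrow> Kd w ep V I {}"
  proof
    assume K: "\<forall>v\<in>carrier_vec ne. weighted_F n w ne ep *\<^sub>v v = 0\<^sub>v n \<longrightarrow> v = 0\<^sub>v ne"
    show "Kd w ep V I {}" unfolding Kd_def
    proof (intro allI impI)
      fix c :: "nat \<Rightarrow> real" and d :: "nat \<Rightarrow> real"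
      assume rows: "\<forall>k\<in>V. (\<Sum>l\<in>I. c l * Fe w ep k l) + (if k \<in> {} then d k else 0) = 0"
      define v where "v = vec ne c"
      have vc: "v \<in> carrier_vec ne" unfolding v_def by simp
      have sv: "\<And>k. (\<Sum>l\<in>I. v $ l * Fe w ep k l) = (\<Sum>l\<in>I. c l * Fe w ep k l)"
        unfolding v_def I_def by (auto intro: sum.cong)
      have "weighted_F n w ne ep *\<^sub>v v = 0\<^sub>v n"
        by (rule eq_vecI) (use rows mv[OF vc] sv Fc in \<open>auto simp: V_def\<close>)
      hence "v = 0\<^sub>v ne" using K vc by blast
      hence "\<forall>l\<in>I. c l = 0" unfolding I_def v_def by (metis index_vec index_zero_vec(1) lessThan_iff)
      thus "(\<forall>l\<in>I. c l = 0) \<and> (\<forall>x\<in>{}. d x = 0)" by simp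
    qed
  next
    assume K: "Kd w ep V I {}"
    show "\<forall>v\<in>carrier_vec ne. weighted_F n w ne ep *\<^sub>v v = 0\<^sub>v n \<longrightarrow> v = 0\<^sub>v ne"
    proof (intro ballI impI)
      fix v :: "real vec" assume vc: "v \<in> carrier_vec ne" and z: "weighted_F n w ne ep *\<^sub>v v = 0\<^sub>v n"
      have "\<forall>k\<in>V. (\<Sum>l\<in>I. v $ l * Fe w ep k l) + (if k \<in> {} then (\<lambda>_. 0) k else 0) = 0"
      proof
        fix k assume "k \<in> V"
        hence k: "k < n" unfolding V_def by simp
        have "(weighted_F n w ne ep *\<^sub>v v) $ k = 0" using z k by simp
        thus "(\<Sum>l\<in>I. v $ l * Fe w ep k l) + (if k \<in> {} then (\<lambda>_. 0) k else 0) = 0"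
          using mv[OF vc k] by simp
      qed
      hence "\<forall>l\<in>I. v $ l = 0"
        using spec[OF spec[OF K[unfolded Kd_def], of "\<lambda>l. v $ l"], of "\<lambda>_. 0"] by simp
      thus "v = 0\<^sub>v ne" using vc unfolding I_def by (intro eq_vecI) auto
    qed
  qed
  have rankK: "vec_space.rank n (weighted_F n w ne ep) = n - 1 \<longleftrightarrow> Kd w ep V I {}"
    using vec_space.rank_iff_ker[OF Fc] kerK cnt by auto
  have arcs_sub: "dg_arcs n w \<subseteq> arcs w ep I"
  proof
    fix p assume "p \<in> dg_arcs n w"
    then obtain i j where p: "p = (i, j)" "i < n" "j < n" "i \<noteq> j" "0 < w j i" unfolding dg_arcs_def by auto
    have "0 \<le> w i j" using assms(2) p by auto
    hence "ug_adj n w i j" using p unfolding ug_adj_def by auto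
    thus "p \<in> arcs w ep I" using p adjeq unfolding arcs_def by auto
  qed
  have HD: "(\<exists>x\<in>V. Hd w ep V I {x}) \<longleftrightarrow> has_directed_rooted_spanning_tree n w"
  proof
    assume "\<exists>x\<in>V. Hd w ep V I {x}"
    then obtain x ori where xV: "x \<in> V" and o1: "\<forall>l\<in>I. 0 < w (hdo ep ori l) (tlo ep ori l)"
      and o2: "\<forall>l\<in>I. hdo ep ori l \<notin> {x}"
      and o3: "\<forall>y\<in>V - {x}. \<exists>!l. l \<in> I \<and> hdo ep ori l = y" unfolding Hd_def by blast
    define T where "T = (\<lambda>l. (tlo ep ori l, hdo ep ori l)) ` I"
    have ht: "\<And>l. l \<in> I \<Longrightarrow> {tlo ep ori l, hdo ep ori l} = {fst (ep l), snd (ep l)}"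
      unfolding tlo_def hdo_def by auto
    have htV: "\<And>l. l \<in> I \<Longrightarrow> tlo ep ori l \<in> V \<and> hdo ep ori l \<in> V \<and> tlo ep ori l \<noteq> hdo ep ori l"
      using E1 unfolding tlo_def hdo_def by auto
    have Tadj: "(\<lambda>a b. (a, b) \<in> T \<or> (b, a) \<in> T) = eadj ep I"
    proof (intro ext iffI)
      fix a b assume "(a, b) \<in> T \<or> (b, a) \<in> T"
      then obtain l where "l \<in> I" "{a, b} = {tlo ep ori l, hdo ep ori l}" unfolding T_def
        by (auto simp: insert_commute)
      thus "eadj ep I a b" using ht unfolding eadj_def by auto
    next
      fix a b assume "eadj ep I a b"
      then obtain l where l: "l \<in> I" "{a, b} = {fst (ep l), snd (ep l)}" unfolding eadj_def by blast
      hence "{a, b} = {tlo ep ori l, hdo ep ori l}" using ht by simp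
      hence "(a, b) = (tlo ep ori l, hdo ep ori l) \<or> (b, a) = (tlo ep ori l, hdo ep ori l)"
        by (auto simp: doubleton_eq_iff)
      thus "(a, b) \<in> T \<or> (b, a) \<in> T" using l unfolding T_def by blast
    qed
    have "directed_rooted_spanning_tree {..<n} (dg_arcs n w) T x"
      unfolding directed_rooted_spanning_tree_def
    proof (intro conjI allI ballI impI)
      show "T \<subseteq> dg_arcs n w" using htV o1 unfolding T_def dg_arcs_def V_def by auto
      show "T \<subseteq> {..<n} \<times> {..<n}" using htV unfolding T_def V_def by auto
      show "x \<in> {..<n}" using xV unfolding V_def by simp
      show "ug_tree {..<n} (\<lambda>a b. (a, b) \<in> T \<or> (b, a) \<in> T)" using tree Tadj unfolding V_def by simp
    next
      fix y show "(y, x) \<notin> T" using o2 unfolding T_def by auto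
    next
      fix y assume y: "y \<in> {..<n}" "y \<noteq> x"
      hence "y \<in> V - {x}" unfolding V_def by simp
      then obtain l where l: "l \<in> I" "hdo ep ori l = y"
        and uq: "\<And>l'. l' \<in> I \<and> hdo ep ori l' = y \<Longrightarrow> l' = l"
        using ex1_obt[OF bspec[OF o3]] by blast
      show "\<exists>!u. (u, y) \<in> T"
      proof (rule ex1I[of _ "tlo ep ori l"])
        show "(tlo ep ori l, y) \<in> T" using l unfolding T_def by auto
      next
        fix u' assume "(u', y) \<in> T"
        then obtain l' where "l' \<in> I" "u' = tlo ep ori l'" "y = hdo ep ori l'" unfolding T_def by auto
        thus "u' = tlo ep ori l" using uq by auto
      qed
    qed
    thus "has_directed_rooted_spanning_tree n w" unfolding has_directed_rooted_spanning_tree_def by blast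
  next
    assume "has_directed_rooted_spanning_tree n w"
    then obtain T r where D: "directed_rooted_spanning_tree {..<n} (dg_arcs n w) T r"
      unfolding has_directed_rooted_spanning_tree_def by blast
    have TA: "T \<subseteq> dg_arcs n w" and rV: "r \<in> V" and con: "ug_connected V (\<lambda>a b. (a, b) \<in> T \<or> (b, a) \<in> T)"
      and root: "\<forall>u. (u, r) \<notin> T" and par: "\<forall>v\<in>V. v \<noteq> r \<longrightarrow> (\<exists>!u. (u, v) \<in> T)"
      using D unfolding directed_rooted_spanning_tree_def ug_tree_def V_def by auto
    have "(r, x) \<in> T\<^sup>*" if "x \<in> V" for x
    proof -
      have "(r, x) \<in> {(a, b). a \<in> V \<and> b \<in> V \<and> ((a, b) \<in> T \<or> (b, a) \<in> T)}\<^sup>*"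
        using con rV that unfolding ug_connected_def by blast
      thus ?thesis
      proof (induction rule: rtrancl_induct)
        case base thus ?case by simp
      next
        case (step y z)
        from step.hyps(2) have yz: "y \<in> V" "(y, z) \<in> T \<or> (z, y) \<in> T" by auto
        show ?case
        proof (cases "(y, z) \<in> T")
          case True thus ?thesis using step.IH by (meson rtrancl_into_rtrancl)
        next
          case False
          hence zy: "(z, y) \<in> T" using yz by auto
          hence "y \<noteq> r" using root by auto
          then obtain p where p: "(r, p) \<in> T\<^sup>*" "(p, y) \<in> T" using step.IH by (metis rtranclE)
          have "p = z" using par yz(1) \<open>y \<noteq> r\<close> p(2) zy by blast
          thus ?thesis using p by simp
        qed
      qed
    qed
    hence "\<forall>x\<in>V. (r, x) \<in> (arcs w ep I)\<^sup>*"
      using rtrancl_mono[OF order_trans[OF TA arcs_sub]] by blast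
    hence "Hd w ep V I {r}" using reach_H[OF lt rV] by blast
    thus "\<exists>x\<in>V. Hd w ep V I {x}" using rV by blast
  qed
  show ?thesis using rankK main HD by simp
qed


end
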